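(* Let $\mathsf V$ be a quantale, $X=(X,a)$ a $\mathsf V$-category, $s=(x_n)_{n\in\mathbb N}$ a Cauchy sequence in $X$ and $x\in X$ such that $\varphi_s=x_*$ and $\psi_s=x^*$, i.e. $\varphi_s(y)=a(x,y)$ and $\psi_s(y)=a(y,x)$ for all $y\in X$. Then $s$ converges to $x$.
   Context: A quantale $(\mathsf V,\otimes,k)$ is a complete anti-symmetric lattice with an associative, commutative operation $\otimes$ with neutral element $k$ distributing over arbitrary suprema. A $\mathsf V$-category $(X,a)$ is a set with $a:X\times X\to\mathsf V$ such that $k\le a(x,x)$ and $a(x,y)\otimes a(y,z)\le a(x,z)$. For a sequence $s=(x_n)$: $\mathrm{Cauchy}(s)=\bigvee_N\bigwedge_{n,m\ge N}a(x_n,x_m)$, $s$ is Cauchy if $k\le\mathrm{Cauchy}(s)$; $\varphi_s(y)=\bigvee_N\bigwedge_{n\ge N}a(x_n,y)$ and $\psi_s(y)=\bigvee_N\bigwedge_{n\ge N}a(y,x_n)$. For $M\subseteq X$, $\overline M=\{x\in X\mid k\le\bigvee_{y\in M}a(x,y)\otimes a(y,x)\}$. A sequence $s$ converges to $x$ if $x\in\overline{\{x_n\mid n\in M\}}$ for every infinite $M\subseteq\mathbb N$. *)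

theory Defs
  imports Main
begin

definition quantale :: "('v::complete_lattice \<Rightarrow> 'v \<Rightarrow> 'v) \<Rightarrow> 'v \<Rightarrow> bool" where
  "quantale tensor k \<longleftrightarrow>
     (\<forall>u v w. tensor (tensor u v) w = tensor u (tensor v w)) \<and>
     (\<forall>u v. tensor u v = tensor v u) \<and>
     (\<forall>u. tensor k u = u \<and> tensor u k = u) \<and>
     (\<forall>u B. tensor u (Sup B) = (SUP b\<in>B. tensor u b)) \<and>
     (\<forall>u B. tensor (Sup B) u = (SUP b\<in>B. tensor b u))"

definition V_category :: "('v::complete_lattice \<Rightarrow> 'v \<Rightarrow> 'v) \<Rightarrow> 'v \<Rightarrow> 'x set \<Rightarrow> ('x \<Rightarrow> 'x \<Rightarrow> 'v) \<Rightarrow> bool" where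
  "V_category tensor k X a \<longleftrightarrow>
     (\<forall>x\<in>X. k \<le> a x x) \<and>
     (\<forall>x\<in>X. \<forall>y\<in>X. \<forall>z\<in>X. tensor (a x y) (a y z) \<le> a x z)"

definition cauchy_val :: "('x \<Rightarrow> 'x \<Rightarrow> 'v::complete_lattice) \<Rightarrow> (nat \<Rightarrow> 'x) \<Rightarrow> 'v" where
  "cauchy_val a s = (SUP N. INF n\<in>{N..}. INF m\<in>{N..}. a (s n) (s m))"

definition is_cauchy :: "'v::complete_lattice \<Rightarrow> ('x \<Rightarrow> 'x \<Rightarrow> 'v) \<Rightarrow> (nat \<Rightarrow> 'x) \<Rightarrow> bool" where
  "is_cauchy k a s \<longleftrightarrow> k \<le> cauchy_val a s"

definition phi_seq :: "('x \<Rightarrow> 'x \<Rightarrow> 'v::complete_lattice) \<Rightarrow> (nat \<Rightarrow> 'x) \<Rightarrow> 'x \<Rightarrow> 'v" where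
  "phi_seq a s y = (SUP N. INF n\<in>{N..}. a (s n) y)"

definition psi_seq :: "('x \<Rightarrow> 'x \<Rightarrow> 'v::complete_lattice) \<Rightarrow> (nat \<Rightarrow> 'x) \<Rightarrow> 'x \<Rightarrow> 'v" where
  "psi_seq a s y = (SUP N. INF n\<in>{N..}. a y (s n))"

definition V_closure :: "('v::complete_lattice \<Rightarrow> 'v \<Rightarrow> 'v) \<Rightarrow> 'v \<Rightarrow> 'x set \<Rightarrow> ('x \<Rightarrow> 'x \<Rightarrow> 'v) \<Rightarrow> 'x set \<Rightarrow> 'x set" where
  "V_closure tensor k X a M = {x\<in>X. k \<le> (SUP y\<in>M. tensor (a x y) (a y x))}"

definition seq_converges :: "('v::complete_lattice \<Rightarrow> 'v \<Rightarrow> 'v) \<Rightarrow> 'v \<Rightarrow> 'x set \<Rightarrow> ('x \<Rightarrow> 'x \<Rightarrow> 'v) \<Rightarrow> (nat \<Rightarrow> 'x) \<Rightarrow> 'x \<Rightarrow> bool" where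
  "seq_converges tensor k X a s x \<longleftrightarrow>
     (\<forall>M::nat set. infinite M \<longrightarrow> x \<in> V_closure tensor k X a (s ` M))"

end

theory Submission
  imports Defs
begin

lemma tmono:
  assumes q: "quantale tensor k" and "u \<le> (v::'v::complete_lattice)"
  shows "tensor w u \<le> tensor w v"
proof -
  have "v = Sup {u, v}" using assms(2) by (simp add: sup_absorb2)
  then have "tensor w v = (SUP b\<in>{u,v}. tensor w b)" using q unfolding quantale_def by metis
  then show ?thesis by (metis image_insert image_empty Sup_insert Sup_empty sup_bot_right sup.cobounded1)
qed

lemma tsup_le:
  assumes q: "quantale tensor k"
    and h: "\<And>N N'. tensor (f N) (g N') \<le> (S::'v::complete_lattice)"
  shows "tensor (SUP N. f N) (SUP N. g N) \<le> S"
proof -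
  have d1: "\<And>u B. tensor (Sup B) u = (SUP b\<in>B. tensor b u)"
    and d2: "\<And>u B. tensor u (Sup B) = (SUP b\<in>B. tensor u b)"
    using q unfolding quantale_def by blast+
  have "tensor (SUP N. f N) (SUP N. g N) = (SUP N. tensor (f N) (SUP N. g N))"
    by (simp only: d1 image_image)
  also have "\<dots> \<le> S"
  proof (rule SUP_least)
    fix N
    have "tensor (f N) (SUP N. g N) = (SUP N'. tensor (f N) (g N'))"
      by (simp only: d2 image_image)
    also have "\<dots> \<le> S" using h by (intro SUP_least) auto
    finally show "tensor (f N) (SUP N. g N) \<le> S" .
  qed
  finally show ?thesis .
qed

theorem proposition3p16:
  fixes tensor :: "'v::complete_lattice \<Rightarrow> 'v \<Rightarrow> 'v" and k :: 'v
    and X :: "'x set" and a :: "'x \<Rightarrow> 'x \<Rightarrow> 'v" and s :: "nat \<Rightarrow> 'x" and x :: 'x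
  assumes "quantale tensor k"
    and "V_category tensor k X a"
    and "\<forall>n. s n \<in> X"
    and "x \<in> X"
    and "is_cauchy k a s"
    and "\<forall>y\<in>X. phi_seq a s y = a x y"
    and "\<forall>y\<in>X. psi_seq a s y = a y x"
  shows "seq_converges tensor k X a s x"
  unfolding seq_converges_def
proof (intro allI impI)
  fix M :: "nat set" assume inf: "infinite M"
  have q: "quantale tensor k" by fact
  have comm: "\<And>u v. tensor u v = tensor v u" and kk: "\<And>u. tensor k u = u"
    using q unfolding quantale_def by auto
  have kx: "k \<le> a x x" using assms(2,4) unfolding V_category_def by auto
  have P: "k \<le> (SUP N. INF n\<in>{N..}. a (s n) x)"
    using assms(6) assms(4) kx unfolding phi_seq_def by auto
  have Q: "k \<le> (SUP N. INF n\<in>{N..}. a x (s n))"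
    using assms(7) assms(4) kx unfolding psi_seq_def by auto
  let ?S = "SUP y\<in>s ` M. tensor (a x y) (a y x)"
  have "\<And>N N'. tensor (INF n\<in>{N..}. a (s n) x) (INF n\<in>{N'..}. a x (s n)) \<le> ?S"
  proof -
    fix N N' :: nat
    obtain m where m: "m \<in> M" "m \<ge> max N N'"
      proof -
      have "\<not> M \<subseteq> {..<max N N'}" using inf finite_subset by blast
      then show ?thesis using that by (metis lessThan_iff max.bounded_iff not_le subsetI)
    qed
    have "tensor (INF n\<in>{N..}. a (s n) x) (INF n\<in>{N'..}. a x (s n))
          \<le> tensor (INF n\<in>{N..}. a (s n) x) (a x (s m))"
      using m by (intro tmono[OF q] INF_lower) auto
    also have "\<dots> = tensor (a x (s m)) (INF n\<in>{N..}. a (s n) x)" by (rule comm)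
    also have "\<dots> \<le> tensor (a x (s m)) (a (s m) x)"
      using m by (intro tmono[OF q] INF_lower) auto
    also have "\<dots> \<le> ?S" using m by (intro SUP_upper) auto
    finally show "tensor (INF n\<in>{N..}. a (s n) x) (INF n\<in>{N'..}. a x (s n)) \<le> ?S" .
  qed
  then have T: "tensor (SUP N. INF n\<in>{N..}. a (s n) x) (SUP N. INF n\<in>{N..}. a x (s n)) \<le> ?S"
    by (rule tsup_le[OF q])
  have "k = tensor k k" by (simp add: kk)
  also have "\<dots> \<le> tensor k (SUP N. INF n\<in>{N..}. a x (s n))" by (rule tmono[OF q Q])
  also have "\<dots> = tensor (SUP N. INF n\<in>{N..}. a x (s n)) k" by (rule comm)
  also have "\<dots> \<le> tensor (SUP N. INF n\<in>{N..}. a x (s n)) (SUP N. INF n\<in>{N..}. a (s n) x)"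
    by (rule tmono[OF q P])
  also have "\<dots> = tensor (SUP N. INF n\<in>{N..}. a (s n) x) (SUP N. INF n\<in>{N..}. a x (s n))" by (rule comm)
  also have "\<dots> \<le> ?S" by (rule T)
  finally show "x \<in> V_closure tensor k X a (s ` M)"
    unfolding V_closure_def using assms(4) by auto
qed

end
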